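(* Let $\psi_n$ be the division polynomials of the Legendre curve defined below. For every $\varepsilon>0$ there exists a constant $c(\varepsilon)$ such that for all $n\ge 1$, $h(\psi_n)\le c(\varepsilon)\, n^{2+\varepsilon}$; that is, $h(\psi_n)\le n^{2+o(1)}$.
   Context: Let $\lambda, X, Y$ be independent variables (associated with the Legendre curve $E_\lambda: Y^2=X(X-1)(X-\lambda)$). Define $\psi_n \in \mathbb{Z}[\lambda,X,Y]$ by $\psi_0=0$, $\psi_1=1$, $\psi_2=2Y$, $\psi_3 = 3X^4-4(1+\lambda)X^3+6\lambda X^2-\lambda^2$, $\psi_4 = 2Y\big(2X^6-4(1+\lambda)X^5+10\lambda X^4-10\lambda^2X^2+4\lambda^2(1+\lambda)X-2\lambda^3\big)$, and recursively $$\psi_{2k+1}=\psi_{k+2}\psi_k^3-\psi_{k-1}\psi_{k+1}^3,\qquad \psi_{2k}=\frac{1}{2Y}\psi_k\big(\psi_{k+2}\psi_{k-1}^2-\psi_{k-2}\psi_{k+1}^2\big).$$ For a polynomial $G$ with integer coefficients, its height $h(G)$ is the logarithm of the maximum of the absolute values of its coefficients. *)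

theory Defs
  imports Complex_Main "HOL-Computational_Algebra.Polynomial"
begin

text \<open>Elements of Z[lambda,X,Y] are represented as nested univariate polynomials:
  polynomials in Y whose coefficients are polynomials in X whose coefficients
  are polynomials in lambda with integer coefficients.\<close>

type_synonym zpoly3 = "int poly poly poly"

definition varY :: zpoly3 where "varY = [:0, 1:]"
definition varX :: zpoly3 where "varX = [:[:0, 1:]:]"
definition varL :: zpoly3 where "varL = [:[:[:0, 1:]:]:]"

definition psi3 :: zpoly3 where
  "psi3 = 3 * varX ^ 4 - 4 * (1 + varL) * varX ^ 3 + 6 * varL * varX ^ 2 - varL ^ 2"

definition psi4 :: zpoly3 where
  "psi4 = 2 * varY * (2 * varX ^ 6 - 4 * (1 + varL) * varX ^ 5 + 10 * varL * varX ^ 4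
          - 10 * varL ^ 2 * varX ^ 2 + 4 * varL ^ 2 * (1 + varL) * varX - 2 * varL ^ 3)"

function divpsi :: "nat \<Rightarrow> zpoly3" where
  "divpsi n =
    (if n = 0 then 0
     else if n = 1 then 1
     else if n = 2 then 2 * varY
     else if n = 3 then psi3
     else if n = 4 then psi4
     else if odd n then
       divpsi (n div 2 + 2) * divpsi (n div 2) ^ 3
         - divpsi (n div 2 - 1) * divpsi (n div 2 + 1) ^ 3
     else
       (divpsi (n div 2) * (divpsi (n div 2 + 2) * divpsi (n div 2 - 1) ^ 2
          - divpsi (n div 2 - 2) * divpsi (n div 2 + 1) ^ 2)) div (2 * varY))"
  by auto
termination
  by (relation "measure id") auto

definition height3 :: "zpoly3 \<Rightarrow> real" where
  "height3 p = ln (real_of_int (Max {\<bar>coeff (coeff (coeff p i) j) k\<bar> | i j k. True}))"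

end

theory Submission
  imports Defs
begin

definition good :: "('a::idom_divide \<Rightarrow> int) \<Rightarrow> bool" where
 "good N \<longleftrightarrow> N 0 = 0 \<and> (\<forall>a. 0 \<le> N a) \<and> (\<forall>a b. N (a+b) \<le> N a + N b)
   \<and> (\<forall>a b. N (a*b) \<le> N a * N b) \<and> (\<forall>a. N (-a) = N a) \<and> (\<forall>a. N (a div 2) \<le> N a)"

definition NP :: "('a::zero \<Rightarrow> int) \<Rightarrow> 'a poly \<Rightarrow> int" where
 "NP N p = (\<Sum>i<Suc (degree p). N (coeff p i))"

lemma NP_eq: assumes "N 0 = 0" "degree p < m" shows "NP N p = (\<Sum>i<m. N (coeff p i))"
  unfolding NP_def
proof (rule sum.mono_neutral_left)
  show "\<forall>i\<in>{..<m} - {..<Suc (degree p)}. N (coeff p i) = 0"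
    using assms by (auto simp: coeff_eq_0)
qed (use assms in auto)

lemma NP_nonneg: "\<forall>a. 0 \<le> N a \<Longrightarrow> 0 \<le> NP N p"
  unfolding NP_def by (simp add: sum_nonneg)

lemma NP_coeff: assumes "N 0 = 0" "\<forall>a. 0 \<le> N a" shows "N (coeff p i) \<le> NP N p"
proof (cases "i \<le> degree p")
  case True thus ?thesis unfolding NP_def
    by (intro member_le_sum) (use assms in auto)
next
  case False thus ?thesis using assms NP_nonneg[of N p] by (simp add: coeff_eq_0)
qed

lemma NP_add: assumes "good N" shows "NP N (p + q) \<le> NP N p + NP N q"
proof -
  define m where "m = Suc (max (degree p) (degree q))"
  have g: "N 0 = 0" "\<forall>a b. N (a+b) \<le> N a + N b" using assms unfolding good_def by auto
  have d: "degree (p+q) < m" using degree_add_le[of p "max (degree p) (degree q)" q] unfolding m_def by simp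
  have "NP N (p+q) = (\<Sum>i<m. N (coeff p i + coeff q i))" using NP_eq[of N, OF g(1) d] by simp
  also have "\<dots> \<le> (\<Sum>i<m. N (coeff p i) + N (coeff q i))" by (intro sum_mono) (use g in auto)
  also have "\<dots> = NP N p + NP N q" 
    by (simp add: sum.distrib NP_eq[of N p m, OF g(1)] NP_eq[of N q m, OF g(1)] m_def)
  finally show ?thesis .
qed

lemma NP_uminus: assumes "good N" shows "NP N (- p) = NP N p"
  using assms unfolding NP_def good_def by simp

lemma NP_diff: assumes "good N" shows "NP N (p - q) \<le> NP N p + NP N q"
  using NP_add[OF assms, of p "-q"] NP_uminus[OF assms, of q] by simp

lemma NP_smult: assumes "good N" shows "NP N (smult a p) \<le> N a * NP N p"
proof -
  have g: "N 0 = 0" "\<forall>a b. N (a*b) \<le> N a * N b" using assms unfolding good_def by auto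
  have d: "degree (smult a p) < Suc (degree p)" using degree_smult_le[of a p] by simp
  have "NP N (smult a p) = (\<Sum>i<Suc (degree p). N (a * coeff p i))" using NP_eq[of N, OF g(1) d] by simp
  also have "\<dots> \<le> (\<Sum>i<Suc (degree p). N a * N (coeff p i))" by (intro sum_mono) (use g in auto)
  also have "\<dots> = N a * NP N p" unfolding NP_def by (rule sum_distrib_left[symmetric])
  finally show ?thesis .
qed

lemma NP_pCons: assumes "N 0 = 0" shows "NP N (pCons a p) = N a + NP N p"
proof -
  have d: "degree (pCons a p) < Suc (Suc (degree p))" using degree_pCons_le[of a p] by simp
  show ?thesis unfolding NP_eq[of N, OF assms d] sum.lessThan_Suc_shift by (simp only: coeff_pCons_0 coeff_pCons_Suc NP_def sum.lessThan_Suc_shift)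
qed

lemma NP_mult: assumes "good N" shows "NP N (p * q) \<le> NP N p * NP N q"
proof (induction p rule: pCons_induct)
  case 0 thus ?case using assms by (simp add: NP_def good_def)
next
  case (pCons a p)
  have g: "N 0 = 0" "\<forall>a. 0 \<le> N a" using assms unfolding good_def by auto
  have "NP N (pCons a p * q) \<le> NP N (smult a q) + NP N (pCons 0 (p*q))"
    using NP_add[OF assms] by simp
  also have "\<dots> \<le> N a * NP N q + NP N p * NP N q"
    using NP_smult[OF assms, of a q] pCons.IH NP_pCons[of N 0 "p*q", OF g(1)] g by simp
  also have "\<dots> = NP N (pCons a p) * NP N q" using NP_pCons[of N, OF g(1)] by (simp add: algebra_simps)
  finally show ?case .
qed


lemma NP_monom: assumes "N 0 = 0" shows "NP N (monom a n) = N a"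
proof -
  have d: "degree (monom a n) < Suc n" using degree_monom_le[of a n] by simp
  have "NP N (monom a n) = (\<Sum>i<Suc n. (if n = i then N a else 0))"
    unfolding NP_eq[of N, OF assms d] by (intro sum.cong) (use assms in \<open>auto simp: coeff_monom\<close>)
  also have "\<dots> = N a" by simp
  finally show ?thesis .
qed

lemma NP_remove: fixes r :: "'a::comm_ring_1 poly" assumes "N 0 = 0" shows "NP N (r - monom (coeff r dr) dr) = NP N r - N (coeff r dr)"
proof -
  define m where "m = Suc (max (degree r) dr)"
  have d1: "degree r < m" unfolding m_def by simp
  have d2: "degree (r - monom (coeff r dr) dr) < m"
    using degree_diff_le[of r "max (degree r) dr" "monom (coeff r dr) dr"] degree_monom_le[of "coeff r dr" dr]
    unfolding m_def by (simp add: le_imp_less_Suc)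
  have pw: "N (coeff r i) = N (coeff (r - monom (coeff r dr) dr) i) + (if i = dr then N (coeff r dr) else 0)" for i
    using assms by (auto simp: coeff_monom)
  have "NP N r = (\<Sum>i<m. N (coeff (r - monom (coeff r dr) dr) i)) + (\<Sum>i<m. (if i = dr then N (coeff r dr) else 0))"
    unfolding NP_eq[of N, OF assms d1] by (subst pw) (simp only: sum.distrib)
  also have "\<dots> = NP N (r - monom (coeff r dr) dr) + N (coeff r dr)"
    unfolding NP_eq[of N, OF assms d2] using d1 unfolding m_def by simp
  finally show ?thesis by simp
qed

lemma dpm: assumes "good N" "\<forall>c. N (c div lc) \<le> N c"
  shows "(n > 0 \<longrightarrow> dr = n - 1 + k) \<Longrightarrow> NP N (divide_poly_main lc q r (monom lc k) dr n) \<le> NP N q + NP N r"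
proof (induction n arbitrary: q r dr)
  case 0 thus ?case using assms NP_nonneg[of N r] by (simp add: good_def)
next
  case (Suc n)
  have g: "N 0 = 0" "\<forall>a. 0 \<le> N a" using assms unfolding good_def by auto
  have dr: "dr = n + k" using Suc.prems by simp
  define cr where "cr = coeff r dr"
  define a where "a = cr div lc"
  show ?case
  proof (cases "a * lc = cr")
    case True
    have eq: "divide_poly_main lc q r (monom lc k) dr (Suc n) =
       divide_poly_main lc (q + monom a n) (r - monom cr dr) (monom lc k) (dr - 1) n"
      using True by (simp add: Let_def a_def cr_def mult_monom dr)
    have "NP N (divide_poly_main lc (q + monom a n) (r - monom cr dr) (monom lc k) (dr - 1) n)
      \<le> NP N (q + monom a n) + NP N (r - monom cr dr)"
      by (rule Suc.IH) (use dr in auto)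
    also have "\<dots> \<le> NP N q + N a + (NP N r - N cr)"
      using NP_add[OF assms(1), of q "monom a n"] NP_monom[of N a n, OF g(1)]
        NP_remove[of N r dr, OF g(1)] unfolding cr_def by simp
    also have "\<dots> \<le> NP N q + NP N r" using assms(2) unfolding a_def by auto
    finally show ?thesis using eq by simp
  next
    case False
    have eq: "divide_poly_main lc q r (monom lc k) dr (Suc n) = 0"
      using False by (simp add: Let_def a_def cr_def)
    show ?thesis unfolding eq using NP_nonneg[of N q] NP_nonneg[of N r] g by (simp add: NP_def)
  qed
qed

lemma NP_div_monom: assumes "good N" "\<forall>c. N (c div lc) \<le> N c"
  shows "NP N (f div monom lc k) \<le> NP N f"
proof (cases "lc = 0")
  case True thus ?thesis using assms NP_nonneg[of N f] by (simp add: good_def NP_def)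
next
  case False
  have nz: "monom lc k \<noteq> 0" using False by simp
  have lcm: "coeff (monom lc k) (degree (monom lc k)) = lc" using False by (simp add: degree_monom_eq)
  have lm: "length (coeffs (monom lc k)) = Suc k"
    using length_coeffs_degree[OF nz] False by (simp add: degree_monom_eq)
  define n' where "n' = 1 + length (coeffs f) - length (coeffs (monom lc k))"
  have eq: "f div monom lc k = divide_poly_main lc 0 f (monom lc k) (degree f) n'"
    using nz unfolding divide_poly_def n'_def lcm by simp
  have inv: "n' > 0 \<longrightarrow> degree f = n' - 1 + k"
  proof (cases "f = 0")
    case True thus ?thesis unfolding n'_def lm by simp
  next
    case False thus ?thesis unfolding n'_def lm using length_coeffs_degree[OF False] by simp
  qed
  have "NP N 0 = 0" using assms by (simp add: NP_def good_def)
  thus ?thesis unfolding eq using dpm[OF assms inv, of 0 f] by simp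
qed

lemma good_NP: assumes "good N" shows "good (NP N)"
proof -
  have g: "N 0 = 0" "\<forall>a. 0 \<le> N a" "\<forall>c. N (c div 2) \<le> N c" using assms unfolding good_def by auto
  have two: "(2::'a poly) = monom 2 0" by (simp add: monom_0 numeral_poly)
  show ?thesis unfolding good_def
    using NP_add[OF assms] NP_mult[OF assms] NP_uminus[OF assms] NP_nonneg[OF g(2)]
      NP_div_monom[OF assms g(3), of _ 0] g(1) unfolding two by (auto simp: NP_def)
qed


lemma good_abs: "good (abs :: int \<Rightarrow> int)"
  unfolding good_def by (auto simp: abs_mult)

definition L :: "zpoly3 \<Rightarrow> int" where "L = NP (NP (NP abs))"

lemma good_L: "good L" unfolding L_def by (intro good_NP good_abs)

lemma L2: "good (NP (NP (abs :: int \<Rightarrow> int)))" by (intro good_NP good_abs)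
lemma L1: "good (NP (abs :: int \<Rightarrow> int))" by (intro good_NP good_abs)

lemma L_nonneg: "0 \<le> L p" using good_L unfolding good_def by auto

lemma coeff_le_L: "\<bar>coeff (coeff (coeff p i) j) k\<bar> \<le> L p"
proof -
  have "\<bar>coeff (coeff (coeff p i) j) k\<bar> \<le> NP abs (coeff (coeff p i) j)"
    by (rule NP_coeff) auto
  also have "\<dots> \<le> NP (NP abs) (coeff p i)"
    by (rule NP_coeff) (use L1 in \<open>auto simp: good_def\<close>)
  also have "\<dots> \<le> L p" unfolding L_def
    by (rule NP_coeff) (use L2 in \<open>auto simp: good_def\<close>)
  finally show ?thesis .
qed

lemma height_le: "height3 p \<le> ln (real_of_int (max 1 (L p)))"
proof -
  define S where "S = {\<bar>coeff (coeff (coeff p i) j) k\<bar> | i j k. True}"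
  have sub: "S \<subseteq> {0..L p}" unfolding S_def using coeff_le_L by auto
  have fin: "finite S" using sub finite_subset by blast
  have ne: "\<bar>coeff (coeff (coeff p 0) 0) 0\<bar> \<in> S" unfolding S_def by blast
  have mi: "Max S \<in> S" using Max_in fin ne by blast
  have le: "Max S \<le> L p" using sub mi by auto
  have ge: "0 \<le> Max S" using sub mi by auto
  have h: "height3 p = ln (real_of_int (Max S))" unfolding height3_def S_def by simp
  show ?thesis
  proof (cases "Max S = 0")
    case True thus ?thesis unfolding h by simp
  next
    case False
    hence "0 < Max S" using ge by simp
    thus ?thesis unfolding h using le by (subst ln_le_cancel_iff) auto
  qed
qed

lemma twoY: "2 * varY = monom 2 1"
  unfolding varY_def by (simp add: monom_Suc monom_0 numeral_poly)

lemma two_pp: "(2 :: int poly poly) = monom 2 0" by (simp add: monom_0 numeral_poly)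

lemma L_div2Y: "L (p div (2 * varY)) \<le> L p"
proof -
  have g: "good (NP (NP (abs :: int \<Rightarrow> int)))" by (rule L2)
  have h: "\<forall>c. NP (NP abs) (c div (2::int poly poly)) \<le> NP (NP abs) c"
    using g unfolding good_def by auto
  show ?thesis unfolding twoY L_def by (rule NP_div_monom[OF g h])
qed

lemma L_add: "L (a + b) \<le> L a + L b" using good_L unfolding good_def by auto
lemma L_mult: "L (a * b) \<le> L a * L b" using good_L unfolding good_def by auto
lemma L_diff: "L (a - b) \<le> L a + L b" unfolding L_def using NP_diff[OF L2] by simp

lemma m4: fixes E a b c d :: int
  assumes "0\<le>a" "a\<le>E" "0\<le>b" "b\<le>E" "0\<le>c" "c\<le>E" "0\<le>d" "d\<le>E"
  shows "a*(b*c*d) \<le> E^4"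
proof -
  have "b*c \<le> E*E" using assms by (intro mult_mono) auto
  hence "b*c*d \<le> E*E*E" using assms by (intro mult_mono) auto
  hence "a*(b*c*d) \<le> E*(E*E*E)" using assms by (intro mult_mono) auto
  thus ?thesis by (simp add: power4_eq_xxxx)
qed

lemma L_prod4: assumes "L a \<le> E" "L b \<le> E" "L c \<le> E" "L d \<le> E"
  shows "L (a * (b * c * d)) \<le> E^4"
proof -
  have "L (a * (b * c * d)) \<le> L a * (L b * L c * L d)"
  proof -
    have "L (b*c) \<le> L b * L c" by (rule L_mult)
    hence "L (b*c*d) \<le> L b * L c * L d"
      using L_mult[of "b*c" d] L_nonneg[of d] L_nonneg[of "b*c"]
      by (meson dual_order.trans mult_right_mono)
    thus ?thesis using L_mult[of a "b*c*d"] L_nonneg[of a]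
      by (meson dual_order.trans mult_left_mono)
  qed
  also have "\<dots> \<le> E^4" by (rule m4) (use assms L_nonneg in auto)
  finally show ?thesis .
qed

lemma psi_odd: "n \<ge> 5 \<Longrightarrow> odd n \<Longrightarrow> divpsi n = divpsi (n div 2 + 2) * divpsi (n div 2) ^ 3
         - divpsi (n div 2 - 1) * divpsi (n div 2 + 1) ^ 3"
  by (subst divpsi.simps) simp

lemma psi_even: "n \<ge> 5 \<Longrightarrow> even n \<Longrightarrow> divpsi n = (divpsi (n div 2) * (divpsi (n div 2 + 2) * divpsi (n div 2 - 1) ^ 2
          - divpsi (n div 2 - 2) * divpsi (n div 2 + 1) ^ 2)) div (2 * varY)"
  by (subst divpsi.simps) simp

declare divpsi.simps[simp del]

lemma step: assumes "n \<ge> 5" "\<forall>j \<le> n div 2 + 2. L (divpsi j) \<le> E"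
  shows "L (divpsi n) \<le> 2 * E^4"
proof -
  define k where "k = n div 2"
  have b: "\<And>j. j \<le> k + 2 \<Longrightarrow> L (divpsi j) \<le> E" using assms(2) unfolding k_def by auto
  show ?thesis
  proof (cases "odd n")
    case True
    have "L (divpsi n) \<le> L (divpsi (k+2) * (divpsi k * divpsi k * divpsi k))
        + L (divpsi (k-1) * (divpsi (k+1) * divpsi (k+1) * divpsi (k+1)))"
      unfolding psi_odd[OF assms(1) True] k_def[symmetric] power3_eq_cube by (rule L_diff)
    also have "\<dots> \<le> E^4 + E^4" by (intro add_mono L_prod4 b) auto
    finally show ?thesis by simp
  next
    case False
    have "L (divpsi n) \<le> L (divpsi k * (divpsi (k + 2) * divpsi (k - 1) ^ 2
          - divpsi (k - 2) * divpsi (k + 1) ^ 2))"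
    proof -
      have "divpsi n = (divpsi k * (divpsi (k + 2) * divpsi (k - 1) ^ 2
          - divpsi (k - 2) * divpsi (k + 1) ^ 2)) div (2 * varY)"
        using psi_even[OF assms(1)] False unfolding k_def by blast
      thus ?thesis using L_div2Y by (simp del: divpsi.simps)
    qed
    also have "\<dots> \<le> L (divpsi k * (divpsi (k + 2) * divpsi (k - 1) * divpsi (k - 1)))
          + L (divpsi k * (divpsi (k - 2) * divpsi (k + 1) * divpsi (k + 1)))"
      unfolding right_diff_distrib power2_eq_square by (simp only: mult.assoc L_diff)
    also have "\<dots> \<le> E^4 + E^4" by (intro add_mono L_prod4 b) auto
    finally show ?thesis by simp
  qed
qed


definition B :: "nat \<Rightarrow> int" where "B n = max 1 (L (divpsi n))"
definition K :: "nat \<Rightarrow> nat" where "K n = max (n - 4) 4"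
definition C :: int where "C = Max ((\<lambda>j. 2 * B j) ` {..11})"

lemma C_ge: "j \<le> 11 \<Longrightarrow> 2 * B j \<le> C"
  unfolding C_def by (intro Max_ge) auto

lemma C_ge2: "2 \<le> C" using C_ge[of 0] unfolding B_def by simp

lemma K_ge: "4 \<le> K n" unfolding K_def by simp

lemma C_le_pow: "0 < e \<Longrightarrow> C \<le> C ^ e" using C_ge2 by (simp add: self_le_power)

lemma main: "2 * B n \<le> C ^ (K n ^ 2)"
proof (induction n rule: less_induct)
  case (less n)
  have e0: "0 < K n ^ 2" using K_ge[of n] by simp
  show ?case
  proof (cases "n \<le> 11")
    case True thus ?thesis using C_ge[OF True] C_le_pow[OF e0] by linarith
  next
    case False
    define m where "m = n div 2 + 2"
    have mn: "m < n" using False unfolding m_def by simp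
    define X where "X = C ^ (K m ^ 2)"
    have X2: "2 \<le> X" using C_le_pow[of "K m ^ 2"] K_ge[of m] C_ge2 unfolding X_def by simp
    have bj: "2 * B j \<le> X" if "j \<le> m" for j
    proof -
      have "K j \<le> K m" using that unfolding K_def by simp
      hence "K j ^ 2 \<le> K m ^ 2" by (simp add: power_mono)
      hence "C ^ (K j ^ 2) \<le> X" unfolding X_def using C_ge2 by (intro power_increasing) auto
      thus ?thesis using less.IH[of j] that mn by simp
    qed
    define E where "E = X div 2"
    have Lj: "\<forall>j \<le> n div 2 + 2. L (divpsi j) \<le> E"
    proof (intro allI impI)
      fix j assume "j \<le> n div 2 + 2"
      hence "2 * B j \<le> X" using bj unfolding m_def by simp
      moreover have "L (divpsi j) \<le> B j" unfolding B_def by simp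
      ultimately show "L (divpsi j) \<le> E" unfolding E_def by presburger
    qed
    have Ln: "L (divpsi n) \<le> 2 * E ^ 4" using step[OF _ Lj] False by simp
    have E0: "0 \<le> E" using X2 unfolding E_def by simp
    have "4 * E^4 \<le> (2*E)^4" using E0 by (simp add: power_mult_distrib)
    also have "\<dots> \<le> X ^ 4" using E0 unfolding E_def by (intro power_mono) auto
    finally have a: "2 * B n \<le> X ^ 4" using Ln X2 unfolding B_def
      by (smt (verit) le_eq_less_or_eq self_le_power zero_less_numeral)
    have "X ^ 4 = C ^ ((2 * K m) ^ 2)" unfolding X_def by (simp add: power_mult[symmetric] power_mult_distrib mult.commute)
    also have "\<dots> \<le> C ^ (K n ^ 2)"
    proof -
      have "2 * K m \<le> K n" using False unfolding K_def m_def by simp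
      hence "(2 * K m) ^ 2 \<le> K n ^ 2" by (rule power_mono) simp
      thus ?thesis using C_ge2 by (intro power_increasing) auto
    qed
    finally show ?thesis using a by simp
  qed
qed

theorem lemmaA3:
  shows "\<forall>\<epsilon>::real. \<epsilon> > 0 \<longrightarrow>
           (\<exists>c::real. \<forall>n::nat. n \<ge> 1 \<longrightarrow>
              height3 (divpsi n) \<le> c * real n powr (2 + \<epsilon>))"
proof (intro allI impI)
  fix \<epsilon> :: real assume ep: "\<epsilon> > 0"
  have lC: "0 \<le> ln (real_of_int C)" using C_ge2 by simp
  show "\<exists>c::real. \<forall>n::nat. n \<ge> 1 \<longrightarrow> height3 (divpsi n) \<le> c * real n powr (2 + \<epsilon>)"
  proof (intro exI[of _ "16 * ln (real_of_int C)"] allI impI)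
    fix n :: nat assume n1: "n \<ge> 1"
    have B1: "1 \<le> B n" unfolding B_def by simp
    have "height3 (divpsi n) \<le> ln (real_of_int (B n))" using height_le unfolding B_def .
    also have "\<dots> \<le> ln (real_of_int (C ^ (K n ^ 2)))"
      using main[of n] B1 C_ge2 by (subst ln_le_cancel_iff) auto
    also have "\<dots> = real (K n ^ 2) * ln (real_of_int C)"
      using C_ge2 by (simp add: ln_realpow)
    also have "\<dots> \<le> (16 * real n ^ 2) * ln (real_of_int C)"
    proof (rule mult_right_mono[OF _ lC])
      have "K n \<le> 4 * n" using n1 unfolding K_def by simp
      hence "K n ^ 2 \<le> (4 * n) ^ 2" by (rule power_mono) simp
      hence "real (K n ^ 2) \<le> real ((4*n)^2)" by linarith
      thus "real (K n ^ 2) \<le> 16 * real n ^ 2" by (simp add: power_mult_distrib)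
    qed
    also have "\<dots> \<le> (16 * ln (real_of_int C)) * real n powr (2 + \<epsilon>)"
    proof -
      have "real n ^ 2 = real n powr 2" using n1 by (simp add: powr_realpow)
      also have "\<dots> \<le> real n powr (2 + \<epsilon>)" using n1 ep by (intro powr_mono) auto
      finally have "real n ^ 2 \<le> real n powr (2 + \<epsilon>)" .
      thus ?thesis using lC by (simp add: mult_left_mono mult.commute mult.left_commute)
    qed
    finally show "height3 (divpsi n) \<le> 16 * ln (real_of_int C) * real n powr (2 + \<epsilon>)" .
  qed
qed

end
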